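(* Let $\boldsymbol{f}$ be a clean map on an $\boldsymbol{\mathcal{L}}_\Lambda$ modal space $\boldsymbol{X}$. Then $\boldsymbol{f}$ is continuous with respect to the Stone topology on $\boldsymbol{X}$.
   Context: Given a countable set $\Phi$ of atoms and a finite set $I$ of agents, $\mathcal{L}$ is the modal language $\varphi::=\top\mid p\mid\neg\varphi\mid\varphi\wedge\varphi\mid\square_i\varphi$. A logic $\Lambda$ is a normal modal logic over $\mathcal{L}$ extending $K$; $\boldsymbol{\varphi}$ is the class of formulas $\Lambda$-equivalent to $\varphi$, $\boldsymbol{\mathcal{L}}_\Lambda$ the set of such classes. Kripke models $M=(\llbracket M\rrbracket,R,\llbracket\cdot\rrbracket)$ have countable nonempty state sets, relations $R_i$ and a valuation; pointed models $Ms$ are evaluated with standard semantics. For a set $X$ of pointed Kripke models, the $\boldsymbol{\mathcal{L}}_\Lambda$ modal space is $\boldsymbol{X}=\{\boldsymbol{x}:x\in X\}$, $\boldsymbol{x}=\{y\in X:y\vDash\varphi\text{ iff }x\vDash\varphi\text{ for all }\varphi\}$. The Stone topology on $\boldsymbol{X}$ has basis $U_{\boldsymbol{\varphi}}=\{\boldsymbol{x}:x\vDash\varphi\}$, $\varphi\in\mathcal{L}$. A multi-pointed action model is $\Sigma\Gamma=(\llbracket\Sigma\rrbracket,\mathsf{R},pre,post,\Gamma)$: countable nonempty set of actions, relations $\mathsf{R}_i$ on it, $pre:\llbracket\Sigma\rrbracket\to\mathcal{L}$, $post:\llbracket\Sigma\rrbracket\to\mathcal{L}$ with each $post(\sigma)$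 either $\top$ or a conjunction of literals over $\Phi$, and $\emptyset\ne\Gamma\subseteq\llbracket\Sigma\rrbracket$. It is precondition finite if $\{\boldsymbol{pre(\sigma)}\}$ is finite; exhaustive over $X$ if each $x\in X$ satisfies $pre(\sigma)$ for some $\sigma\in\Gamma$; deterministic over $X$ if no $x\in X$ satisfies $pre(\sigma)\wedge pre(\sigma')$ for distinct $\sigma,\sigma'\in\Gamma$. The product update $Ms\otimes\Sigma\Gamma$ has states $\{(s,\sigma):Ms\vDash pre(\sigma)\}$, relations $(s,\sigma)R'_i(t,\tau)$ iff $sR_it$ and $\sigma\mathsf{R}_i\tau$, valuation $\llbracket p\rrbracket'=\{(s,\sigma):s\in\llbracket p\rrbracket,post(\sigma)\nvDash\neg p\}\cup\{(s,\sigma):post(\sigma)\vDash p\}$, and designated state $(s,\sigma)$ with $\sigma\in\Gamma$ the unique action with $Ms\vDash pre(\sigma)$. $\Sigma\Gamma$ is closing over $X$ if $x\otimes\Sigma\Gamma\in X$ for all $x\in X$. A map $\boldsymbol{f}:\boldsymbol{X}\to\boldsymbol{X}$ is clean if there is a precondition finite $\Sigma\Gamma$, closing, deterministic and exhaustive over $X$, with $\boldsymbol{f}(\boldsymbol{x})=\boldsymbol{y}$ iff $x\otimes\Sigma\Gamma\in\boldsymbol{y}$. *)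

theory Defs
  imports "HOL-Analysis.Analysis"
begin

datatype ('p, 'i) fm =
    Top
  | Atom 'p
  | Neg "('p, 'i) fm"
  | Conj "('p, 'i) fm" "('p, 'i) fm"
  | Box 'i "('p, 'i) fm"

definition Imp :: "('p, 'i) fm \<Rightarrow> ('p, 'i) fm \<Rightarrow> ('p, 'i) fm" where
  "Imp a b = Neg (Conj a (Neg b))"

definition Iff :: "('p, 'i) fm \<Rightarrow> ('p, 'i) fm \<Rightarrow> ('p, 'i) fm" where
  "Iff a b = Conj (Imp a b) (Imp b a)"

fun peval :: "(('p, 'i) fm \<Rightarrow> bool) \<Rightarrow> ('p, 'i) fm \<Rightarrow> bool" where
  "peval v Top = True"
| "peval v (Atom p) = v (Atom p)"
| "peval v (Neg a) = (\<not> peval v a)"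
| "peval v (Conj a b) = (peval v a \<and> peval v b)"
| "peval v (Box i a) = v (Box i a)"

definition tautology :: "('p, 'i) fm \<Rightarrow> bool" where
  "tautology a \<longleftrightarrow> (\<forall>v. peval v a)"

fun subst :: "('p \<Rightarrow> ('p, 'i) fm) \<Rightarrow> ('p, 'i) fm \<Rightarrow> ('p, 'i) fm" where
  "subst s Top = Top"
| "subst s (Atom p) = s p"
| "subst s (Neg a) = Neg (subst s a)"
| "subst s (Conj a b) = Conj (subst s a) (subst s b)"
| "subst s (Box i a) = Box i (subst s a)"

definition normal_logic :: "('p, 'i) fm set \<Rightarrow> bool" where
  "normal_logic L \<longleftrightarrow>
     (\<forall>a. tautology a \<longrightarrow> a \<in> L) \<and>
     (\<forall>i a b. Imp (Box i (Imp a b)) (Imp (Box i a) (Box i b)) \<in> L) \<and>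
     (\<forall>a b. a \<in> L \<longrightarrow> Imp a b \<in> L \<longrightarrow> b \<in> L) \<and>
     (\<forall>i a. a \<in> L \<longrightarrow> Box i a \<in> L) \<and>
     (\<forall>s a. a \<in> L \<longrightarrow> subst s a \<in> L)"

definition lclass :: "('p, 'i) fm set \<Rightarrow> ('p, 'i) fm \<Rightarrow> ('p, 'i) fm set" where
  "lclass L a = {b. Iff a b \<in> L}"

text \<open>States are drawn from the countable universe nat (models have countable state sets).\<close>
record ('p, 'i) kmodel =
  W :: "nat set"
  Rel :: "'i \<Rightarrow> (nat \<times> nat) set"
  Val :: "'p \<Rightarrow> nat set"

definition is_kmodel :: "('p, 'i) kmodel \<Rightarrow> bool" where
  "is_kmodel M \<longleftrightarrow> W M \<noteq> {} \<and> (\<forall>i. Rel M i \<subseteq> W M \<times> W M) \<and> (\<forall>p. Val M p \<subseteq> W M)"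

type_synonym ('p, 'i) pmodel = "('p, 'i) kmodel \<times> nat"

definition is_pmodel :: "('p, 'i) pmodel \<Rightarrow> bool" where
  "is_pmodel x \<longleftrightarrow> is_kmodel (fst x) \<and> snd x \<in> W (fst x)"

fun sat :: "('p, 'i) kmodel \<Rightarrow> nat \<Rightarrow> ('p, 'i) fm \<Rightarrow> bool" where
  "sat M s Top = True"
| "sat M s (Atom p) = (s \<in> Val M p)"
| "sat M s (Neg a) = (\<not> sat M s a)"
| "sat M s (Conj a b) = (sat M s a \<and> sat M s b)"
| "sat M s (Box i a) = (\<forall>t. (s, t) \<in> Rel M i \<longrightarrow> sat M t a)"

definition psat :: "('p, 'i) pmodel \<Rightarrow> ('p, 'i) fm \<Rightarrow> bool" where
  "psat x a = sat (fst x) (snd x) a"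

definition entails :: "('p, 'i) fm \<Rightarrow> ('p, 'i) fm \<Rightarrow> bool" where
  "entails a b \<longleftrightarrow> (\<forall>x::('p, 'i) pmodel. is_pmodel x \<longrightarrow> psat x a \<longrightarrow> psat x b)"

definition mclass :: "('p, 'i) pmodel set \<Rightarrow> ('p, 'i) pmodel \<Rightarrow> ('p, 'i) pmodel set" where
  "mclass X x = {y \<in> X. \<forall>a. psat y a \<longleftrightarrow> psat x a}"

definition mspace :: "('p, 'i) pmodel set \<Rightarrow> ('p, 'i) pmodel set set" where
  "mspace X = mclass X ` X"

definition basic_open :: "('p, 'i) pmodel set \<Rightarrow> ('p, 'i) fm \<Rightarrow> ('p, 'i) pmodel set set" where
  "basic_open X a = {mclass X x | x. x \<in> X \<and> psat x a}"

definition stone_topology :: "('p, 'i) pmodel set \<Rightarrow> ('p, 'i) pmodel set topology" where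
  "stone_topology X = topology_generated_by (range (basic_open X))"

record ('p, 'i) amodel =
  Act :: "nat set"
  ARel :: "'i \<Rightarrow> (nat \<times> nat) set"
  pre :: "nat \<Rightarrow> ('p, 'i) fm"
  post :: "nat \<Rightarrow> ('p, 'i) fm"
  Gam :: "nat set"

definition literal :: "('p, 'i) fm \<Rightarrow> bool" where
  "literal a \<longleftrightarrow> (\<exists>p. a = Atom p \<or> a = Neg (Atom p))"

inductive conj_literals :: "('p, 'i) fm \<Rightarrow> bool" where
  "literal a \<Longrightarrow> conj_literals a"
| "conj_literals a \<Longrightarrow> conj_literals b \<Longrightarrow> conj_literals (Conj a b)"

definition is_amodel :: "('p, 'i) amodel \<Rightarrow> bool" where
  "is_amodel A \<longleftrightarrow> Act A \<noteq> {} \<and> (\<forall>i. ARel A i \<subseteq> Act A \<times> Act A) \<and>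
     (\<forall>\<sigma>\<in>Act A. post A \<sigma> = Top \<or> conj_literals (post A \<sigma>)) \<and>
     Gam A \<noteq> {} \<and> Gam A \<subseteq> Act A"

definition precondition_finite :: "('p, 'i) fm set \<Rightarrow> ('p, 'i) amodel \<Rightarrow> bool" where
  "precondition_finite L A \<longleftrightarrow> finite ((\<lambda>\<sigma>. lclass L (pre A \<sigma>)) ` Act A)"

definition exhaustive :: "('p, 'i) pmodel set \<Rightarrow> ('p, 'i) amodel \<Rightarrow> bool" where
  "exhaustive X A \<longleftrightarrow> (\<forall>x\<in>X. \<exists>\<sigma>\<in>Gam A. psat x (pre A \<sigma>))"

definition deterministic :: "('p, 'i) pmodel set \<Rightarrow> ('p, 'i) amodel \<Rightarrow> bool" where
  "deterministic X A \<longleftrightarrow> (\<forall>x\<in>X. \<forall>\<sigma>\<in>Gam A. \<forall>\<tau>\<in>Gam A. \<sigma> \<noteq> \<tau> \<longrightarrow>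
      \<not> psat x (Conj (pre A \<sigma>) (pre A \<tau>)))"

text \<open>Product update. The product state (s,\<sigma>) is represented by prod_encode (s,\<sigma>).\<close>
definition upd_model :: "('p, 'i) kmodel \<Rightarrow> ('p, 'i) amodel \<Rightarrow> ('p, 'i) kmodel" where
  "upd_model M A =
     \<lparr> W = prod_encode ` {(s, \<sigma>). s \<in> W M \<and> \<sigma> \<in> Act A \<and> sat M s (pre A \<sigma>)},
       Rel = (\<lambda>i. {(prod_encode (s, \<sigma>), prod_encode (t, \<tau>)) | s \<sigma> t \<tau>.
                    s \<in> W M \<and> \<sigma> \<in> Act A \<and> sat M s (pre A \<sigma>) \<and>
                    t \<in> W M \<and> \<tau> \<in> Act A \<and> sat M t (pre A \<tau>) \<and>
                    (s, t) \<in> Rel M i \<and> (\<sigma>, \<tau>) \<in> ARel A i}),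
       Val = (\<lambda>p. prod_encode ` (
                {(s, \<sigma>). s \<in> W M \<and> \<sigma> \<in> Act A \<and> sat M s (pre A \<sigma>) \<and>
                    s \<in> Val M p \<and> \<not> entails (post A \<sigma>) (Neg (Atom p))} \<union>
                {(s, \<sigma>). s \<in> W M \<and> \<sigma> \<in> Act A \<and> sat M s (pre A \<sigma>) \<and>
                    entails (post A \<sigma>) (Atom p)})) \<rparr>"

definition update :: "('p, 'i) pmodel \<Rightarrow> ('p, 'i) amodel \<Rightarrow> ('p, 'i) pmodel" where
  "update x A = (upd_model (fst x) A,
     prod_encode (snd x, THE \<sigma>. \<sigma> \<in> Gam A \<and> psat x (pre A \<sigma>)))"

definition closing :: "('p, 'i) pmodel set \<Rightarrow> ('p, 'i) amodel \<Rightarrow> bool" where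
  "closing X A \<longleftrightarrow> (\<forall>x\<in>X. update x A \<in> X)"

definition clean :: "('p, 'i) fm set \<Rightarrow> ('p, 'i) pmodel set \<Rightarrow>
    (('p, 'i) pmodel set \<Rightarrow> ('p, 'i) pmodel set) \<Rightarrow> bool" where
  "clean L X f \<longleftrightarrow> (\<exists>A. is_amodel A \<and> precondition_finite L A \<and> closing X A \<and>
      deterministic X A \<and> exhaustive X A \<and>
      (\<forall>x\<in>X. \<forall>y\<in>X. f (mclass X x) = mclass X y \<longleftrightarrow> update x A \<in> mclass X y))"

end

theory Submission imports Defs begin

lemma upd_rel:
  "(prod_encode (s,\<sigma>), u) \<in> Rel (upd_model M A) i \<longleftrightarrow>
   (\<exists>t \<tau>. u = prod_encode (t,\<tau>) \<and> s \<in> W M \<and> \<sigma> \<in> Act A \<and> sat M s (pre A \<sigma>) \<and>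
                    t \<in> W M \<and> \<tau> \<in> Act A \<and> sat M t (pre A \<tau>) \<and>
                    (s, t) \<in> Rel M i \<and> (\<sigma>, \<tau>) \<in> ARel A i)"
  unfolding upd_model_def by auto

lemma upd_val:
  "prod_encode (s,\<sigma>) \<in> Val (upd_model M A) p \<longleftrightarrow>
   s \<in> W M \<and> \<sigma> \<in> Act A \<and> sat M s (pre A \<sigma>) \<and>
   ((s \<in> Val M p \<and> \<not> entails (post A \<sigma>) (Neg (Atom p))) \<or> entails (post A \<sigma>) (Atom p))"
  unfolding upd_model_def by auto

definition Lw :: "('p, 'i) fm set \<Rightarrow> (('p, 'i) kmodel \<times> nat) set" where
  "Lw L = {(M,s). is_kmodel M \<and> s \<in> W M \<and> (\<forall>b\<in>L. sat M s b)}"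

definition sem :: "('p, 'i) fm set \<Rightarrow> ('p, 'i) fm \<Rightarrow> (('p, 'i) kmodel \<times> nat) set" where
  "sem L a = {(M,s) \<in> Lw L. sat M s a}"

fun conjs :: "('p, 'i) fm list \<Rightarrow> ('p, 'i) fm" where
  "conjs [] = Top"
| "conjs (a # as) = Conj a (conjs as)"

lemma sat_conjs: "sat M s (conjs as) \<longleftrightarrow> (\<forall>a\<in>set as. sat M s a)"
  by (induction as) auto

lemma sat_Imp: "sat M s (Imp a b) \<longleftrightarrow> (sat M s a \<longrightarrow> sat M s b)"
  by (simp add: Imp_def)

lemma sat_Iff: "sat M s (Iff a b) \<longleftrightarrow> (sat M s a \<longleftrightarrow> sat M s b)"
  by (auto simp add: Iff_def Imp_def)

lemma Lw_succ:
  assumes "normal_logic L" "(M,s) \<in> Lw L" "(s,t) \<in> Rel M i"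
  shows "(M,t) \<in> Lw L"
proof -
  have k: "is_kmodel M" using assms(2) by (simp add: Lw_def)
  then have "t \<in> W M" using assms(3) unfolding is_kmodel_def by blast
  moreover have "\<forall>b\<in>L. sat M t b"
  proof
    fix b assume "b \<in> L"
    then have "Box i b \<in> L" using assms(1) unfolding normal_logic_def by blast
    then have "sat M s (Box i b)" using assms(2) unfolding Lw_def by blast
    then show "sat M t b" using assms(3) by simp
  qed
  ultimately show ?thesis using k by (simp add: Lw_def)
qed

lemma box_sem:
  assumes "normal_logic L" "(M,s) \<in> Lw L" "sem L a = sem L b"
  shows "sat M s (Box i a) = sat M s (Box i b)"
proof -
  have "\<And>t. (s,t) \<in> Rel M i \<Longrightarrow> sat M t a = sat M t b"
  proof -
    fix t assume "(s,t) \<in> Rel M i"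
    then have "(M,t) \<in> Lw L" by (rule Lw_succ[OF assms(1,2)])
    then show "sat M t a = sat M t b" using assms(3) unfolding sem_def by blast
  qed
  then show ?thesis by auto
qed

lemma lclass_sem:
  assumes "normal_logic L" "lclass L a = lclass L b"
  shows "sem L a = sem L b"
proof -
  have "tautology (Iff a a)" by (simp add: tautology_def Iff_def Imp_def)
  then have "Iff a a \<in> L" using assms(1) unfolding normal_logic_def by blast
  then have "a \<in> lclass L b" using assms(2) unfolding lclass_def by blast
  then have "Iff b a \<in> L" unfolding lclass_def by blast
  then have "\<And>M s. (M,s) \<in> Lw L \<Longrightarrow> sat M s (Iff b a)" unfolding Lw_def by blast
  then have "\<And>M s. (M,s) \<in> Lw L \<Longrightarrow> sat M s a = sat M s b" unfolding sat_Iff by blast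
  then show ?thesis unfolding sem_def by blast
qed

lemma sem_Neg: "sem L (Neg a) = Lw L - sem L a"
  unfolding sem_def by auto
lemma sem_Conj: "sem L (Conj a b) = sem L a \<inter> sem L b"
  unfolding sem_def by auto
lemma sem_Imp: "sem L (Imp a b) = Lw L - (sem L a - sem L b)"
  unfolding sem_def by (auto simp: sat_Imp)

lemma finite_image_factor:
  assumes "finite (f ` S)" "\<And>x y. x \<in> S \<Longrightarrow> y \<in> S \<Longrightarrow> f x = f y \<Longrightarrow> g x = g y"
  shows "finite (g ` S)"
proof -
  have "g ` S = (\<lambda>c. g (SOME x. x \<in> S \<and> f x = c)) ` (f ` S)"
  proof (rule set_eqI, rule iffI)
    fix z assume "z \<in> g ` S"
    then obtain x where x: "x \<in> S" "z = g x" by blast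
    have sx: "(SOME y. y \<in> S \<and> f y = f x) \<in> S \<and> f (SOME y. y \<in> S \<and> f y = f x) = f x"
      by (rule someI[of _ x]) (use x in auto)
    show "z \<in> (\<lambda>c. g (SOME x. x \<in> S \<and> f x = c)) ` (f ` S)"
    proof -
      let ?y = "SOME y. y \<in> S \<and> f y = f x"
      have "g ?y = g x" using assms(2) sx x(1) by blast
      then have "z = (\<lambda>c. g (SOME x. x \<in> S \<and> f x = c)) (f x)" using x(2) by simp
      then show ?thesis using x(1) by blast
    qed
  next
    fix z assume "z \<in> (\<lambda>c. g (SOME x. x \<in> S \<and> f x = c)) ` (f ` S)"
    then obtain x where x: "x \<in> S" "z = g (SOME y. y \<in> S \<and> f y = f x)" by blast
    have "(SOME y. y \<in> S \<and> f y = f x) \<in> S \<and> f (SOME y. y \<in> S \<and> f y = f x) = f x"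
      by (rule someI[of _ x]) (use x in auto)
    then show "z \<in> g ` S" using x by blast
  qed
  then show ?thesis using assms(1) by simp
qed

lemma main:
  assumes L: "normal_logic L" and A: "is_amodel A" and pf: "precondition_finite L A"
  shows "\<exists>T. (\<forall>\<sigma>\<in>Act A. \<forall>M s. (M,s) \<in> Lw L \<longrightarrow> sat M s (pre A \<sigma>) \<longrightarrow>
             (sat (upd_model M A) (prod_encode (s,\<sigma>)) \<phi> \<longleftrightarrow> sat M s (T \<sigma>)))
          \<and> finite (sem L ` T ` Act A)"
proof (induction \<phi>)
  case Top
  define T where "T = (\<lambda>_::nat. Top :: ('a,'b) fm)"
  have "finite (T ` Act A)" unfolding T_def by (rule finite_subset[of _ "{Top}"]) auto
  then have "finite (sem L ` T ` Act A)" by (rule finite_imageI)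
  moreover have "\<forall>\<sigma>\<in>Act A. \<forall>M s. (M,s) \<in> Lw L \<longrightarrow> sat M s (pre A \<sigma>) \<longrightarrow>
             (sat (upd_model M A) (prod_encode (s,\<sigma>)) Top \<longleftrightarrow> sat M s (T \<sigma>))" by (simp add: T_def)
  ultimately show ?case by blast
next
  case (Atom p)
  define T where "T = (\<lambda>\<sigma>. if entails (post A \<sigma>) (Atom p) then Top
     else if entails (post A \<sigma>) (Neg (Atom p)) then Neg Top else (Atom p :: ('a,'b) fm))"
  have "T ` Act A \<subseteq> {Top, Neg Top, Atom p}" unfolding T_def by auto
  then have "finite (T ` Act A)" by (rule finite_subset) simp
  moreover have "\<forall>\<sigma>\<in>Act A. \<forall>M s. (M,s) \<in> Lw L \<longrightarrow> sat M s (pre A \<sigma>) \<longrightarrow>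
             (sat (upd_model M A) (prod_encode (s,\<sigma>)) (Atom p) \<longleftrightarrow> sat M s (T \<sigma>))"
  proof (intro ballI allI impI)
    fix \<sigma> M s assume "\<sigma> \<in> Act A" "(M,s) \<in> Lw L" "sat M s (pre A \<sigma>)"
    then have h: "s \<in> W M" "\<sigma> \<in> Act A" "sat M s (pre A \<sigma>)" unfolding Lw_def by auto
    show "sat (upd_model M A) (prod_encode (s,\<sigma>)) (Atom p) \<longleftrightarrow> sat M s (T \<sigma>)"
      unfolding sat.simps(2) upd_val using h unfolding T_def by simp
  qed
  ultimately show ?case by blast
next
  case (Neg \<phi>)
  then obtain T where T1: "\<forall>\<sigma>\<in>Act A. \<forall>M s. (M,s) \<in> Lw L \<longrightarrow> sat M s (pre A \<sigma>) \<longrightarrow>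
             (sat (upd_model M A) (prod_encode (s,\<sigma>)) \<phi> \<longleftrightarrow> sat M s (T \<sigma>))"
    and T2: "finite (sem L ` T ` Act A)" by blast
  define T' where "T' = (\<lambda>\<sigma>. Neg (T \<sigma>))"
  have "sem L ` (\<lambda>\<sigma>. Neg (T \<sigma>)) ` Act A \<subseteq> (\<lambda>c. Lw L - c) ` (sem L ` T ` Act A)"
    by (auto simp: sem_Neg)
  then have "finite (sem L ` (\<lambda>\<sigma>. Neg (T \<sigma>)) ` Act A)" using T2 by (meson finite_imageI finite_subset)
  moreover have "\<forall>\<sigma>\<in>Act A. \<forall>M s. (M,s) \<in> Lw L \<longrightarrow> sat M s (pre A \<sigma>) \<longrightarrow>
             (sat (upd_model M A) (prod_encode (s,\<sigma>)) (Neg \<phi>) \<longleftrightarrow> sat M s (T' \<sigma>))"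
    using T1 unfolding T'_def by simp
  ultimately show ?case unfolding T'_def[symmetric] by blast
next
  case (Conj \<phi>1 \<phi>2)
  then obtain T1 T2 where T1: "\<forall>\<sigma>\<in>Act A. \<forall>M s. (M,s) \<in> Lw L \<longrightarrow> sat M s (pre A \<sigma>) \<longrightarrow>
             (sat (upd_model M A) (prod_encode (s,\<sigma>)) \<phi>1 \<longleftrightarrow> sat M s (T1 \<sigma>))"
    and F1: "finite (sem L ` T1 ` Act A)"
    and T2: "\<forall>\<sigma>\<in>Act A. \<forall>M s. (M,s) \<in> Lw L \<longrightarrow> sat M s (pre A \<sigma>) \<longrightarrow>
             (sat (upd_model M A) (prod_encode (s,\<sigma>)) \<phi>2 \<longleftrightarrow> sat M s (T2 \<sigma>))"
    and F2: "finite (sem L ` T2 ` Act A)" by blast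
  define T' where "T' = (\<lambda>\<sigma>. Conj (T1 \<sigma>) (T2 \<sigma>))"
  have "sem L ` (\<lambda>\<sigma>. Conj (T1 \<sigma>) (T2 \<sigma>)) ` Act A \<subseteq>
        (\<lambda>(c,d). c \<inter> d) ` ((sem L ` T1 ` Act A) \<times> (sem L ` T2 ` Act A))"
  proof
    fix c assume "c \<in> sem L ` (\<lambda>\<sigma>. Conj (T1 \<sigma>) (T2 \<sigma>)) ` Act A"
    then obtain \<sigma> where "\<sigma> \<in> Act A" "c = sem L (Conj (T1 \<sigma>) (T2 \<sigma>))" by blast
    then show "c \<in> (\<lambda>(c,d). c \<inter> d) ` ((sem L ` T1 ` Act A) \<times> (sem L ` T2 ` Act A))"
      by (intro image_eqI[of _ _ "(sem L (T1 \<sigma>), sem L (T2 \<sigma>))"]) (auto simp: sem_Conj)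
  qed
  then have "finite (sem L ` (\<lambda>\<sigma>. Conj (T1 \<sigma>) (T2 \<sigma>)) ` Act A)"
    using F1 F2 by (meson finite_SigmaI finite_imageI finite_subset)
  moreover have "\<forall>\<sigma>\<in>Act A. \<forall>M s. (M,s) \<in> Lw L \<longrightarrow> sat M s (pre A \<sigma>) \<longrightarrow>
             (sat (upd_model M A) (prod_encode (s,\<sigma>)) (Conj \<phi>1 \<phi>2) \<longleftrightarrow> sat M s (T' \<sigma>))"
    using T1 T2 unfolding T'_def by simp
  ultimately show ?case unfolding T'_def[symmetric] by blast
next
  case (Box i \<phi>)
  then obtain T where T1: "\<forall>\<sigma>\<in>Act A. \<forall>M s. (M,s) \<in> Lw L \<longrightarrow> sat M s (pre A \<sigma>) \<longrightarrow>
             (sat (upd_model M A) (prod_encode (s,\<sigma>)) \<phi> \<longleftrightarrow> sat M s (T \<sigma>))"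
    and T2: "finite (sem L ` T ` Act A)" by blast
  define V where "V = (\<lambda>\<tau>. Imp (pre A \<tau>) (T \<tau>))"
  have fp: "finite (sem L ` pre A ` Act A)"
  proof -
    have "finite ((\<lambda>\<sigma>. lclass L (pre A \<sigma>)) ` Act A)" using pf by (simp add: precondition_finite_def)
    then have "finite ((\<lambda>\<sigma>. sem L (pre A \<sigma>)) ` Act A)"
      by (rule finite_image_factor) (use lclass_sem[OF L] in blast)
    then show ?thesis by (simp add: image_image)
  qed
  have "sem L ` V ` Act A \<subseteq> (\<lambda>(c,d). Lw L - (c - d)) ` ((sem L ` pre A ` Act A) \<times> (sem L ` T ` Act A))"
  proof
    fix c assume "c \<in> sem L ` V ` Act A"
    then obtain \<sigma> where "\<sigma> \<in> Act A" "c = sem L (V \<sigma>)" by blast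
    then show "c \<in> (\<lambda>(c,d). Lw L - (c - d)) ` ((sem L ` pre A ` Act A) \<times> (sem L ` T ` Act A))"
      by (intro image_eqI[of _ _ "(sem L (pre A \<sigma>), sem L (T \<sigma>))"]) (auto simp: sem_Imp V_def)
  qed
  then have fV: "finite (sem L ` V ` Act A)"
    using fp T2 by (meson finite_SigmaI finite_imageI finite_subset)
  define S where "S = (\<lambda>\<sigma>. sem L ` V ` {\<tau> \<in> Act A. (\<sigma>,\<tau>) \<in> ARel A i})"
  define rep where "rep = (\<lambda>c. SOME a. sem L a = c)"
  define G where "G = (\<lambda>C. conjs (map (\<lambda>c. Box i (rep c)) (SOME xs. set xs = C)))"
  define T' where "T' = (\<lambda>\<sigma>. G (S \<sigma>))"
  have Ssub: "S \<sigma> \<subseteq> sem L ` V ` Act A" for \<sigma> unfolding S_def by auto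
  then have Sfin: "finite (S \<sigma>)" for \<sigma> using fV finite_subset by blast
  have setS: "set (SOME xs. set xs = S \<sigma>) = S \<sigma>" for \<sigma>
    by (rule someI_ex) (use Sfin finite_list in blast)
  have rep: "sem L (rep (sem L a)) = sem L a" for a
    unfolding rep_def by (rule someI_ex) blast
  have "T' ` Act A \<subseteq> G ` Pow (sem L ` V ` Act A)" unfolding T'_def using Ssub by blast
  then have "finite (T' ` Act A)" using fV by (meson finite_Pow_iff finite_imageI finite_subset)
  then have fin: "finite (sem L ` T' ` Act A)" by simp
  have eq: "sat (upd_model M A) (prod_encode (s,\<sigma>)) (Box i \<phi>) \<longleftrightarrow> sat M s (T' \<sigma>)"
    if \<sigma>: "\<sigma> \<in> Act A" and Ms: "(M,s) \<in> Lw L" and pr: "sat M s (pre A \<sigma>)" for \<sigma> M s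
  proof -
    have k: "is_kmodel M" "s \<in> W M" using Ms by (auto simp: Lw_def)
    have "sat (upd_model M A) (prod_encode (s,\<sigma>)) (Box i \<phi>) \<longleftrightarrow>
      (\<forall>t \<tau>. (s,t) \<in> Rel M i \<longrightarrow> (\<sigma>,\<tau>) \<in> ARel A i \<longrightarrow> \<tau> \<in> Act A \<longrightarrow> sat M t (pre A \<tau>) \<longrightarrow>
          sat (upd_model M A) (prod_encode (t,\<tau>)) \<phi>)"
    proof -
      have hW: "\<forall>t. (s,t) \<in> Rel M i \<longrightarrow> t \<in> W M" using k unfolding is_kmodel_def by blast
      show ?thesis using hW k \<sigma> pr by (auto simp: upd_rel)
    qed
    also have "\<dots> \<longleftrightarrow> (\<forall>t \<tau>. (s,t) \<in> Rel M i \<longrightarrow> (\<sigma>,\<tau>) \<in> ARel A i \<longrightarrow> \<tau> \<in> Act A \<longrightarrow> sat M t (pre A \<tau>) \<longrightarrow>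
          sat M t (T \<tau>))"
    proof -
      have IH: "sat (upd_model M A) (prod_encode (t,\<tau>)) \<phi> = sat M t (T \<tau>)"
        if "(s,t) \<in> Rel M i" "\<tau> \<in> Act A" "sat M t (pre A \<tau>)" for t \<tau>
      proof -
        have "(M,t) \<in> Lw L" by (rule Lw_succ[OF L Ms that(1)])
        then show ?thesis using T1 that(2,3) by blast
      qed
      show ?thesis using IH by (meson)
    qed
    also have "\<dots> \<longleftrightarrow> (\<forall>\<tau>. (\<sigma>,\<tau>) \<in> ARel A i \<longrightarrow> \<tau> \<in> Act A \<longrightarrow> sat M s (Box i (V \<tau>)))"
      unfolding V_def by (auto simp: sat_Imp)
    also have "\<dots> \<longleftrightarrow> (\<forall>c \<in> S \<sigma>. sat M s (Box i (rep c)))"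
    proof
      assume H: "\<forall>\<tau>. (\<sigma>,\<tau>) \<in> ARel A i \<longrightarrow> \<tau> \<in> Act A \<longrightarrow> sat M s (Box i (V \<tau>))"
      show "\<forall>c \<in> S \<sigma>. sat M s (Box i (rep c))"
      proof
        fix c assume "c \<in> S \<sigma>"
        then obtain \<tau> where \<tau>: "(\<sigma>,\<tau>) \<in> ARel A i" "\<tau> \<in> Act A" "c = sem L (V \<tau>)"
          unfolding S_def by blast
        have "sat M s (Box i (V \<tau>))" using H \<tau> by blast
        then show "sat M s (Box i (rep c))"
          using box_sem[OF L Ms rep[of "V \<tau>"], of i] \<tau>(3) by (simp del: sat.simps)
      qed
    next
      assume H: "\<forall>c \<in> S \<sigma>. sat M s (Box i (rep c))"
      show "\<forall>\<tau>. (\<sigma>,\<tau>) \<in> ARel A i \<longrightarrow> \<tau> \<in> Act A \<longrightarrow> sat M s (Box i (V \<tau>))"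
      proof (intro allI impI)
        fix \<tau> assume \<tau>: "(\<sigma>,\<tau>) \<in> ARel A i" "\<tau> \<in> Act A"
        then have "sem L (V \<tau>) \<in> S \<sigma>" unfolding S_def by blast
        then have "sat M s (Box i (rep (sem L (V \<tau>))))" using H by blast
        then show "sat M s (Box i (V \<tau>))"
          using box_sem[OF L Ms rep[of "V \<tau>"], of i] by (simp del: sat.simps)
      qed
    qed
    also have "\<dots> \<longleftrightarrow> sat M s (T' \<sigma>)"
      unfolding T'_def G_def by (simp add: sat_conjs setS del: sat.simps)
    finally show ?thesis .
  qed
  show ?case using eq fin by blast
qed

lemma mclass_self: "x \<in> X \<Longrightarrow> x \<in> mclass X x"
  unfolding mclass_def by auto

lemma mclass_eq_psat: "x \<in> X \<Longrightarrow> mclass X x = mclass X z \<Longrightarrow> psat x a = psat z a"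
  unfolding mclass_def by blast

lemma in_basic: "x \<in> X \<Longrightarrow> mclass X x \<in> basic_open X a \<longleftrightarrow> psat x a"
  unfolding basic_open_def using mclass_eq_psat by blast

lemma topsp: "\<Union> (range (basic_open X)) = mclass X ` X"
proof
  show "\<Union> (range (basic_open X)) \<subseteq> mclass X ` X" unfolding basic_open_def by auto
  show "mclass X ` X \<subseteq> \<Union> (range (basic_open X))"
  proof
    fix c assume "c \<in> mclass X ` X"
    then obtain x where "x \<in> X" "c = mclass X x" by blast
    then have "c \<in> basic_open X Top" unfolding basic_open_def psat_def by (intro CollectI exI[of _ x]) simp
    then show "c \<in> \<Union> (range (basic_open X))" by blast
  qed
qed

theorem proposition7:
  fixes L :: "('p::countable, 'i::finite) fm set"
    and X :: "('p, 'i) pmodel set"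
    and f :: "('p, 'i) pmodel set \<Rightarrow> ('p, 'i) pmodel set"
  assumes "normal_logic L"
    and "\<forall>x\<in>X. is_pmodel x"
    and "\<forall>x\<in>X. \<forall>a\<in>L. psat x a"
    and "clean L X f"
  shows "continuous_map (stone_topology X) (stone_topology X) f"
proof -
  obtain A where A: "is_amodel A" "precondition_finite L A" "closing X A"
      "deterministic X A" "exhaustive X A"
      and fA: "\<forall>x\<in>X. \<forall>y\<in>X. f (mclass X x) = mclass X y \<longleftrightarrow> update x A \<in> mclass X y"
    using assms(4) unfolding clean_def by blast
  have updX: "x \<in> X \<Longrightarrow> update x A \<in> X" for x using A(3) unfolding closing_def by blast
  have fx: "x \<in> X \<Longrightarrow> f (mclass X x) = mclass X (update x A)" for x
  proof -
    assume x: "x \<in> X"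
    have "update x A \<in> mclass X (update x A)" using mclass_self updX[OF x] .
    then show ?thesis using fA x updX[OF x] by blast
  qed
  have top: "topspace (stone_topology X) = mclass X ` X"
    unfolding stone_topology_def by (simp add: topsp)
  have Lw: "x \<in> X \<Longrightarrow> (fst x, snd x) \<in> Lw L" for x
    using assms(2,3) unfolding Lw_def is_pmodel_def psat_def by (cases x) force
  have GA: "Gam A \<subseteq> Act A" using A(1) unfolding is_amodel_def by blast
  have the_act: "(THE \<sigma>. \<sigma> \<in> Gam A \<and> psat x (pre A \<sigma>)) = \<sigma>"
    if "x \<in> X" "\<sigma> \<in> Gam A" "psat x (pre A \<sigma>)" for x \<sigma>
  proof (rule the_equality)
    show "\<sigma> \<in> Gam A \<and> psat x (pre A \<sigma>)" using that by blast
    fix \<tau> assume "\<tau> \<in> Gam A \<and> psat x (pre A \<tau>)"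
    then show "\<tau> = \<sigma>" using that A(4) unfolding deterministic_def psat_def by auto
  qed
  show ?thesis
    unfolding stone_topology_def
  proof (rule continuous_on_generated_topo)
    show "f ` topspace (topology_generated_by (range (basic_open X))) \<subseteq> \<Union> (range (basic_open X))"
    proof
      fix c assume "c \<in> f ` topspace (topology_generated_by (range (basic_open X)))"
      then obtain x where x: "x \<in> X" "c = f (mclass X x)" using top unfolding stone_topology_def by auto
      then have "c = mclass X (update x A)" using fx by blast
      then show "c \<in> \<Union> (range (basic_open X))" using updX[OF x(1)] topsp by blast
    qed
  next
    fix U assume "U \<in> range (basic_open X)"
    then obtain \<phi> where U: "U = basic_open X \<phi>" by blast
    obtain T where T: "\<forall>\<sigma>\<in>Act A. \<forall>M s. (M,s) \<in> Lw L \<longrightarrow> sat M s (pre A \<sigma>) \<longrightarrow>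
             (sat (upd_model M A) (prod_encode (s,\<sigma>)) \<phi> \<longleftrightarrow> sat M s (T \<sigma>))"
      using main[OF assms(1) A(1,2)] by blast
    have key: "psat (update x A) \<phi> \<longleftrightarrow> (\<exists>\<sigma>\<in>Gam A. psat x (Conj (pre A \<sigma>) (T \<sigma>)))"
      if x: "x \<in> X" for x
    proof -
      obtain \<sigma> where s: "\<sigma> \<in> Gam A" "psat x (pre A \<sigma>)" using A(5) x unfolding exhaustive_def by blast
      have "psat (update x A) \<phi> \<longleftrightarrow> sat (upd_model (fst x) A) (prod_encode (snd x, \<sigma>)) \<phi>"
        unfolding update_def the_act[OF x s] by (simp add: psat_def)
      also have "\<dots> \<longleftrightarrow> psat x (T \<sigma>)"
        using T Lw[OF x] s GA unfolding psat_def by blast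
      also have "\<dots> \<longleftrightarrow> (\<exists>\<sigma>\<in>Gam A. psat x (Conj (pre A \<sigma>) (T \<sigma>)))"
      proof
        assume "psat x (T \<sigma>)"
        then show "\<exists>\<sigma>\<in>Gam A. psat x (Conj (pre A \<sigma>) (T \<sigma>))"
          using s unfolding psat_def by auto
      next
        assume "\<exists>\<sigma>\<in>Gam A. psat x (Conj (pre A \<sigma>) (T \<sigma>))"
        then obtain \<tau> where t: "\<tau> \<in> Gam A" "psat x (pre A \<tau>)" "psat x (T \<tau>)"
          unfolding psat_def by auto
        have "\<tau> = \<sigma>" using the_act[OF x t(1,2)] the_act[OF x s] by simp
        then show "psat x (T \<sigma>)" using t(3) by simp
      qed
      finally show ?thesis .
    qed
    have "f -` U \<inter> topspace (topology_generated_by (range (basic_open X))) =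
          \<Union> ((\<lambda>\<sigma>. basic_open X (Conj (pre A \<sigma>) (T \<sigma>))) ` Gam A)"
    proof (rule set_eqI)
      fix c
      show "c \<in> f -` U \<inter> topspace (topology_generated_by (range (basic_open X))) \<longleftrightarrow>
            c \<in> \<Union> ((\<lambda>\<sigma>. basic_open X (Conj (pre A \<sigma>) (T \<sigma>))) ` Gam A)"
      proof
        assume c: "c \<in> f -` U \<inter> topspace (topology_generated_by (range (basic_open X)))"
        then have "c \<in> topspace (topology_generated_by (range (basic_open X)))" by blast
        then have "c \<in> mclass X ` X" using top unfolding stone_topology_def by blast
        then obtain x where x: "x \<in> X" "c = mclass X x" by blast
        then have "mclass X (update x A) \<in> basic_open X \<phi>" using c fx U by auto
        then have "psat (update x A) \<phi>" using in_basic updX x by blast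
        then obtain \<sigma> where "\<sigma> \<in> Gam A" "psat x (Conj (pre A \<sigma>) (T \<sigma>))" using key x by blast
        then show "c \<in> \<Union> ((\<lambda>\<sigma>. basic_open X (Conj (pre A \<sigma>) (T \<sigma>))) ` Gam A)"
          using x in_basic by blast
      next
        assume c: "c \<in> \<Union> ((\<lambda>\<sigma>. basic_open X (Conj (pre A \<sigma>) (T \<sigma>))) ` Gam A)"
        then obtain \<sigma> where s: "\<sigma> \<in> Gam A" "c \<in> basic_open X (Conj (pre A \<sigma>) (T \<sigma>))" by blast
        then obtain x where x: "x \<in> X" "c = mclass X x" unfolding basic_open_def by blast
        then have "psat x (Conj (pre A \<sigma>) (T \<sigma>))" using s in_basic by blast
        then have "psat (update x A) \<phi>" using key x s by blast
        then have "mclass X (update x A) \<in> basic_open X \<phi>" using in_basic[OF updX[OF x(1)]] by blast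
        then have "f c \<in> U" using x fx U by simp
        moreover have "c \<in> topspace (topology_generated_by (range (basic_open X)))"
          using top x unfolding stone_topology_def by auto
        ultimately show "c \<in> f -` U \<inter> topspace (topology_generated_by (range (basic_open X)))" by blast
      qed
    qed
    moreover have "openin (topology_generated_by (range (basic_open X)))
          (\<Union> ((\<lambda>\<sigma>. basic_open X (Conj (pre A \<sigma>) (T \<sigma>))) ` Gam A))"
      by (rule openin_Union) (auto intro: topology_generated_by_Basis)
    ultimately show "openin (topology_generated_by (range (basic_open X)))
          (f -` U \<inter> topspace (topology_generated_by (range (basic_open X))))" by simp
  qed
qed

end
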